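(* Let $m\ge 2$, let $K$ be a Latin square on $[m]$ and let $J$ be a subsquare of $K$. Then there exists a simple degeneration $M[K;J]$ of $M[K]$ whose restriction to $X(J)$ is the uniform matroid of rank $2$. Moreover, $$\dim H^1(A(M[K;J]),e_\lambda)=1$$ for a non-zero one-form $e_\lambda=\lambda_1(e_1+\cdots+e_m)+\lambda_2(e_{m+1}+\cdots+e_{2m})+\lambda_3(e_{2m+1}+\cdots+e_{3m})$ with $\lambda_1+\lambda_2+\lambda_3=0$.
   Context: $R$ is the coefficient ring (a field, so dimension makes sense); $E$ is the exterior algebra over $R$ on degree-one generators $e_1,\ldots,e_{3m}$, with $\partial 1=0$, $\partial(e_{i_1}\wedge\cdots\wedge e_{i_p})=\sum_{k=1}^p(-1)^{k-1}e_{i_1}\wedge\cdots\wedge\widehat{e_{i_k}}\wedge\cdots\wedge e_{i_p}$. The Orlik–Solomon algebra $A(M)$ of a loopless matroid $M$ on $[3m]$ is $E$ modulo the ideal generated by $\partial(e_{i_1}\wedge\cdots\wedge e_{i_s})$ over all circuits $\{i_1,\ldots,i_s\}$; $H^p(A(M),e_\lambda)$ is the cohomology of $(A(M),e_\lambda\wedge\cdot)$. A Latin square $K=(k_{i,j})$ on $[m]$ is an $m\times m$ matrix with entries in $[m]$, each symbol once in each row and column. $M[K]$ is the unique simple rank-$3$ matroid on $[3m]$ whose family of $3$-element circuits is $\mathcal{C}[K]=\{\{i,m+j,2m+k_{i,j}\}:1\le i,j\le m\}$. A subsquare of $K$ is an $s\times s$ submatrix formed by $s$ rows and $s$ columns that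 is itself a Latin square of order $s$ (on $s$ symbols). For a subsquare $J$ with row set $R_J$, column set $C_J$ and symbol set $S_J$, put $X(J)=R_J\cup\{m+j:j\in C_J\}\cup\{2m+k:k\in S_J\}$. A loopless rank-$3$ matroid $M'$ on $[3m]$ is a degeneration of $M$ if its family of $3$-element circuits contains that of $M$. *)

theory Defs
  imports Complex_Main "HOL-Library.Function_Algebras"
begin

definition latin_square :: "nat \<Rightarrow> (nat \<Rightarrow> nat \<Rightarrow> nat) \<Rightarrow> bool" where
  "latin_square m K \<longleftrightarrow>
     (\<forall>i\<in>{1..m}. bij_betw (\<lambda>j. K i j) {1..m} {1..m}) \<and>
     (\<forall>j\<in>{1..m}. bij_betw (\<lambda>i. K i j) {1..m} {1..m})"

definition subsquare :: "nat \<Rightarrow> (nat \<Rightarrow> nat \<Rightarrow> nat) \<Rightarrow> nat set \<Rightarrow> nat set \<Rightarrow> nat set \<Rightarrow> bool" where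
  "subsquare m K Rs Cs Ss \<longleftrightarrow>
     Rs \<subseteq> {1..m} \<and> Cs \<subseteq> {1..m} \<and> Ss \<subseteq> {1..m} \<and> Rs \<noteq> {} \<and>
     card Rs = card Cs \<and> card Cs = card Ss \<and>
     (\<forall>i\<in>Rs. bij_betw (\<lambda>j. K i j) Cs Ss) \<and>
     (\<forall>j\<in>Cs. bij_betw (\<lambda>i. K i j) Rs Ss)"

definition XJ :: "nat \<Rightarrow> nat set \<Rightarrow> nat set \<Rightarrow> nat set \<Rightarrow> nat set" where
  "XJ m Rs Cs Ss = Rs \<union> (\<lambda>j. m + j) ` Cs \<union> (\<lambda>k. 2*m + k) ` Ss"

definition CK :: "nat \<Rightarrow> (nat \<Rightarrow> nat \<Rightarrow> nat) \<Rightarrow> nat set set" where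
  "CK m K = {{i, m + j, 2*m + K i j} | i j. i \<in> {1..m} \<and> j \<in> {1..m}}"

definition matroid :: "nat set \<Rightarrow> (nat set \<Rightarrow> bool) \<Rightarrow> bool" where
  "matroid E indep \<longleftrightarrow> finite E \<and> indep {} \<and>
     (\<forall>I. indep I \<longrightarrow> I \<subseteq> E) \<and>
     (\<forall>I J. indep J \<and> I \<subseteq> J \<longrightarrow> indep I) \<and>
     (\<forall>I J. indep I \<and> indep J \<and> card I < card J \<longrightarrow> (\<exists>x\<in>J - I. indep (insert x I)))"

definition circuits :: "nat set \<Rightarrow> (nat set \<Rightarrow> bool) \<Rightarrow> nat set set" where
  "circuits E indep = {C. C \<subseteq> E \<and> \<not> indep C \<and> (\<forall>D. D \<subset> C \<longrightarrow> indep D)}"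

definition mrank :: "(nat set \<Rightarrow> bool) \<Rightarrow> nat set \<Rightarrow> nat" where
  "mrank indep X = Max {card I | I. I \<subseteq> X \<and> indep I}"

definition loopless :: "nat set \<Rightarrow> (nat set \<Rightarrow> bool) \<Rightarrow> bool" where
  "loopless E indep \<longleftrightarrow> (\<forall>x\<in>E. indep {x})"

definition simple_matroid :: "nat set \<Rightarrow> (nat set \<Rightarrow> bool) \<Rightarrow> bool" where
  "simple_matroid E indep \<longleftrightarrow> (\<forall>X. X \<subseteq> E \<and> card X \<le> 2 \<longrightarrow> indep X)"

text \<open>A degeneration of M[K]: a loopless rank-3 matroid on [3m] whose family of
  3-element circuits contains C[K] (which is the family of 3-element circuits of M[K]).\<close>
definition degeneration_of_MK :: "nat \<Rightarrow> (nat \<Rightarrow> nat \<Rightarrow> nat) \<Rightarrow> (nat set \<Rightarrow> bool) \<Rightarrow> bool" where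
  "degeneration_of_MK m K indep \<longleftrightarrow>
     matroid {1..3*m} indep \<and> loopless {1..3*m} indep \<and> mrank indep {1..3*m} = 3 \<and>
     CK m K \<subseteq> {C \<in> circuits {1..3*m} indep. card C = 3}"

definition restriction_uniform2 :: "(nat set \<Rightarrow> bool) \<Rightarrow> nat set \<Rightarrow> bool" where
  "restriction_uniform2 indep X \<longleftrightarrow> (\<forall>Y. Y \<subseteq> X \<longrightarrow> (indep Y \<longleftrightarrow> card Y \<le> 2))"

text \<open>An element of the exterior algebra E on generators e_1, ..., e_n over a field 'a
  is represented by its coefficient function: f S is the coefficient of
  e_S = e_{s_1} \<and> ... \<and> e_{s_p} (s_1 < ... < s_p, S = {s_1,...,s_p}).\<close>

definition ebas :: "nat set \<Rightarrow> nat set \<Rightarrow> 'a::field" where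
  "ebas S = (\<lambda>T. if T = S then 1 else 0)"

text \<open>e_S \<and> e_T = ext_sign S T * e_{S \<union> T} for disjoint S, T.\<close>
definition ext_sign :: "nat set \<Rightarrow> nat set \<Rightarrow> 'a::field" where
  "ext_sign S T = (-1) ^ card {(s, t). s \<in> S \<and> t \<in> T \<and> t < s}"

definition wedge :: "(nat set \<Rightarrow> 'a::field) \<Rightarrow> (nat set \<Rightarrow> 'a) \<Rightarrow> nat set \<Rightarrow> 'a" where
  "wedge f g = (\<lambda>U. if finite U then (\<Sum>S\<in>Pow U. ext_sign S (U - S) * f S * g (U - S)) else 0)"

definition bd :: "nat set \<Rightarrow> nat set \<Rightarrow> 'a::field" where
  "bd C = (\<lambda>T. \<Sum>c\<in>C. if T = C - {c} then (-1) ^ card {x \<in> C. x < c} else 0)"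

definition escale :: "'a::field \<Rightarrow> (nat set \<Rightarrow> 'a) \<Rightarrow> nat set \<Rightarrow> 'a" where
  "escale c f = (\<lambda>S. c * f S)"

definition Edeg :: "nat \<Rightarrow> nat \<Rightarrow> (nat set \<Rightarrow> 'a::field) set" where
  "Edeg n p = {f. \<forall>S. f S \<noteq> 0 \<longrightarrow> S \<subseteq> {1..n} \<and> card S = p}"

definition os_ideal :: "nat \<Rightarrow> nat set set \<Rightarrow> (nat set \<Rightarrow> 'a::field) set" where
  "os_ideal n Cs = module.span escale
     {wedge (wedge (ebas S) (bd C)) (ebas T) | S C T. S \<subseteq> {1..n} \<and> T \<subseteq> {1..n} \<and> C \<in> Cs}"

text \<open>dim H^p(A, w) for A = E / I (I = os_ideal n Cs, a graded ideal) and the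
  differential w \<and> - : with Z = {x \<in> E^p. w \<and> x \<in> I} (preimage of the cocycles) and
  B = w \<and> E^(p-1) + I^p (preimage of the coboundaries), H^p = Z / B, so
  dim H^p = dim Z - dim B.\<close>
definition os_cohom_dim :: "nat \<Rightarrow> nat set set \<Rightarrow> (nat set \<Rightarrow> 'a::field) \<Rightarrow> nat \<Rightarrow> nat" where
  "os_cohom_dim n Cs w p =
     (let I = os_ideal n Cs;
          Z = {x \<in> Edeg n p. wedge w x \<in> I};
          B = {wedge w y + z | y z. y \<in> (if p = 0 then {0} else Edeg n (p - 1)) \<and> z \<in> I \<inter> Edeg n p}
      in vector_space.dim escale Z - vector_space.dim escale B)"

definition oneform :: "nat \<Rightarrow> 'a::field \<Rightarrow> 'a \<Rightarrow> 'a \<Rightarrow> nat set \<Rightarrow> 'a" where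
  "oneform m l1 l2 l3 =
     (\<lambda>S. if \<exists>i. S = {i} \<and> 1 \<le> i \<and> i \<le> m then l1
          else if \<exists>i. S = {i} \<and> m < i \<and> i \<le> 2*m then l2
          else if \<exists>i. S = {i} \<and> 2*m < i \<and> i \<le> 3*m then l3
          else 0)"

end

theory Submission
  imports Defs
begin


lemma escale_apply[simp]: "escale c f S = c * f S" by (simp add: escale_def)

lemma vs_escale: "vector_space (escale :: 'a::field \<Rightarrow> (nat set \<Rightarrow> 'a) \<Rightarrow> _)"
  by unfold_locales (auto simp: escale_def fun_eq_iff algebra_simps)

lemma mod_escale: "module (escale :: 'a::field \<Rightarrow> (nat set \<Rightarrow> 'a) \<Rightarrow> _)"
  using vs_escale module_iff_vector_space by blast

lemma sum_fun_apply: "(\<Sum>p\<in>A. f p) (U::nat set) = (\<Sum>p\<in>A. (f p U :: 'a::comm_monoid_add))"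
  by (induction A rule: infinite_finite_induct) auto

definition hom :: "nat \<Rightarrow> (nat set \<Rightarrow> 'a::field) \<Rightarrow> bool" where
  "hom p f \<longleftrightarrow> (\<forall>U. f U \<noteq> 0 \<longrightarrow> finite U \<and> card U = p)"

lemma hom_wedge:
  assumes "hom p f" "hom q g" shows "hom (p+q) (wedge f g)"
  unfolding hom_def
proof (intro allI impI)
  fix U assume h: "wedge f g U \<noteq> 0"
  then have fin: "finite U" by (auto simp: wedge_def split: if_splits)
  with h have "(\<Sum>S\<in>Pow U. ext_sign S (U - S) * f S * g (U - S)) \<noteq> 0"
    unfolding wedge_def by simp
  then obtain S where S: "S \<in> Pow U" "ext_sign S (U - S) * f S * g (U - S) \<noteq> 0"
    by (meson sum.not_neutral_contains_not_neutral)
  then have "f S \<noteq> 0" "g (U - S) \<noteq> 0" by auto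
  with assms have "card S = p" "card (U - S) = q" unfolding hom_def by auto
  moreover have "card U = card S + card (U - S)"
  proof -
    have "S \<subseteq> U" "finite S" using S(1) fin finite_subset by auto
    then show ?thesis using fin by (simp add: card_Diff_subset card_mono)
  qed
  ultimately show "finite U \<and> card U = p + q" using fin by simp
qed

lemma hom_ebas: "finite S \<Longrightarrow> hom (card S) (ebas S)"
  by (auto simp: hom_def ebas_def split: if_splits)

lemma bd_nz: assumes "(bd C U :: 'a::field) \<noteq> 0" shows "\<exists>c\<in>C. U = C - {c}"
proof -
  have "(\<Sum>c\<in>C. if U = C - {c} then (-1::'a) ^ card {x \<in> C. x < c} else 0) \<noteq> 0"
    using assms unfolding bd_def .
  then obtain c where "c \<in> C" "(if U = C - {c} then (-1::'a) ^ card {x \<in> C. x < c} else 0) \<noteq> 0"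
    by (rule sum.not_neutral_contains_not_neutral)
  then have "U = C - {c}" by (simp split: if_splits)
  then show ?thesis using \<open>c \<in> C\<close> by blast
qed

lemma hom_bd: assumes "finite C" shows "hom (card C - 1) (bd C)"
  unfolding hom_def
proof (intro allI impI)
  fix U assume "bd C U \<noteq> 0"
  then obtain c where "c \<in> C" "U = C - {c}" using bd_nz by blast
  then show "finite U \<and> card U = card C - 1" using assms by simp
qed

lemma ext_sign_empty1[simp]: "ext_sign {} U = 1" by (simp add: ext_sign_def)
lemma ext_sign_empty2[simp]: "ext_sign U {} = 1" by (simp add: ext_sign_def)

lemma wedge_unit_left: assumes "hom p f" shows "wedge (ebas {}) f = f"
proof (rule ext)
  fix U
  show "wedge (ebas {}) f U = f U"
  proof (cases "finite U")
    case True
    have "(\<Sum>S\<in>Pow U. ext_sign S (U - S) * ebas {} S * f (U - S)) =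
          (\<Sum>S\<in>{{}}. ext_sign S (U - S) * ebas {} S * f (U - S))"
      by (rule sum.mono_neutral_right) (auto simp: ebas_def True)
    then show ?thesis using True by (simp add: wedge_def ebas_def)
  next
    case False then show ?thesis using assms by (auto simp: wedge_def hom_def)
  qed
qed

lemma wedge_unit_right: assumes "hom p f" shows "wedge f (ebas {}) = f"
proof (rule ext)
  fix U
  show "wedge f (ebas {}) U = f U"
  proof (cases "finite U")
    case True
    have "(\<Sum>S\<in>Pow U. ext_sign S (U - S) * f S * ebas {} (U - S)) =
          (\<Sum>S\<in>{U}. ext_sign S (U - S) * f S * ebas {} (U - S))"
      by (rule sum.mono_neutral_right) (auto simp: ebas_def True)
    then show ?thesis using True by (simp add: wedge_def ebas_def)
  next
    case False then show ?thesis using assms by (auto simp: wedge_def hom_def)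
  qed
qed

lemma bd_infinite: "finite C \<Longrightarrow> infinite U \<Longrightarrow> bd C U = 0"
  using bd_nz by fastforce

lemma gen_char:
  assumes Cs: "\<And>C. C \<in> Cs \<Longrightarrow> finite C \<and> 3 \<le> card C"
    and g: "g \<in> {wedge (wedge (ebas S) (bd C)) (ebas T) | S C T. S \<subseteq> {1..n} \<and> T \<subseteq> {1..n} \<and> C \<in> Cs}"
  shows "(\<forall>U. g U \<noteq> 0 \<longrightarrow> finite U \<and> 2 \<le> card U) \<and>
         (\<forall>U. card U = 2 \<longrightarrow> g U \<noteq> 0 \<longrightarrow> (\<exists>C\<in>Cs. card C = 3 \<and> g = bd C))"
proof -
  obtain S C T where g: "g = wedge (wedge (ebas S) (bd C)) (ebas T)"
    and ST: "S \<subseteq> {1..n}" "T \<subseteq> {1..n}" and C: "C \<in> Cs" using g by blast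
  have fS: "finite S" "finite T" using ST finite_subset by blast+
  have fC: "finite C" "3 \<le> card C" using Cs C by auto
  have h: "hom (card S + (card C - 1) + card T) g"
    unfolding g by (intro hom_wedge hom_ebas hom_bd fS fC)
  show ?thesis
  proof (rule conjI; intro allI impI)
    fix U assume "g U \<noteq> 0"
    then have "finite U" "card U = card S + (card C - 1) + card T" using h unfolding hom_def by blast+
    then show "finite U \<and> 2 \<le> card U" using fC(2) by linarith
  next
    fix U assume U: "card U = 2" "g U \<noteq> 0"
    then have "card U = card S + (card C - 1) + card T" using h unfolding hom_def by blast
    then have "card S = 0" "card T = 0" "card C = 3" using U(1) fC(2) by linarith+
    then have "S = {}" "T = {}" using fS by auto
    then have "g = bd C" unfolding g
      by (simp add: wedge_unit_left[OF hom_bd[OF fC(1)]] wedge_unit_right[OF hom_bd[OF fC(1)]])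
    then show "\<exists>C\<in>Cs. card C = 3 \<and> g = bd C" using C \<open>card C = 3\<close> by blast
  qed
qed

lemma span_vanish:
  fixes \<phi> :: "(nat set \<Rightarrow> 'a::field) \<Rightarrow> 'a"
  assumes add: "\<And>f g. \<phi> (f + g) = \<phi> f + \<phi> g" and sc: "\<And>c f. \<phi> (escale c f) = c * \<phi> f"
    and gen: "\<And>g. g \<in> G \<Longrightarrow> \<phi> g = 0" and y: "y \<in> module.span escale G"
  shows "\<phi> y = 0"
proof -
  have z: "\<phi> 0 = 0" using sc[of 0 0] by (simp add: escale_def zero_fun_def)
  show ?thesis
  proof (rule module.span_induct[OF mod_escale y, of "\<lambda>y. \<phi> y = 0"])
    show "module.subspace escale {y. \<phi> y = 0}"
      unfolding module.subspace_def[OF mod_escale] using z add sc by auto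
  qed (use gen in auto)
qed

lemma bd3:
  assumes "a < b" "b < c"
  shows "bd {a,b,c} U = (if U = {b,c} then 1 else 0) + (if U = {a,c} then -1 else 0) + (if U = {a,b} then 1 else 0)"
proof -
  have s1: "{x \<in> {a,b,c}. x < a} = {}" "{x \<in> {a,b,c}. x < b} = {a}" "{x \<in> {a,b,c}. x < c} = {a,b}"
    using assms by auto
  have d: "{a,b,c} - {a} = {b,c}" "{a,b,c} - {b} = {a,c}" "{a,b,c} - {c} = {a,b}" using assms by auto
  have e: "(\<Sum>x\<in>{a,b,c}. h x) = h a + h b + h c" for h :: "nat \<Rightarrow> 'a"
    using assms by (simp add: add.assoc)
  have c2: "card {b,c} = 2" "card {a,c} = 2" "card {a,b} = 2" using assms by auto
  have ne: "{a,b} \<noteq> {b,c}" "{a,b} \<noteq> {a,c}" "{a,c} \<noteq> {b,c}" using assms by (auto simp: doubleton_eq_iff)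
  have p: "(-1::'a) ^ card ({}::nat set) = 1" "(-1::'a) ^ card {a} = -1" "(-1::'a) ^ card {a,b} = 1"
    using c2 by simp_all
  show ?thesis unfolding bd_def e s1 d p by (simp add: ne ne[symmetric])
qed

lemma wedge11:
  assumes "hom 1 f" "hom 1 g" "a < b"
  shows "wedge f g {a,b} = f {a} * g {b} - f {b} * g {a}"
proof -
  have c2: "card {a,b} = 2" using assms(3) by simp
  have h0: "h {} = 0" "h {a,b} = 0" if "hom 1 h" for h :: "nat set \<Rightarrow> 'a"
  proof -
    show "h {} = 0"
    proof (rule ccontr)
      assume "h {} \<noteq> 0" then have "card ({}::nat set) = 1" using that unfolding hom_def by blast
      then show False by simp
    qed
    show "h {a,b} = 0"
    proof (rule ccontr)
      assume "h {a,b} \<noteq> 0" then have "card {a,b} = 1" using that unfolding hom_def by blast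
      then show False using c2 by simp
    qed
  qed
  have f0: "f {} = 0" "g {} = 0" "f {a,b} = 0" "g {a,b} = 0" using h0 assms(1,2) by auto
  have e1: "{(s, t). s = a \<and> t = b \<and> t < s} = {}" using assms(3) by auto
  have s1: "ext_sign {a} {b} = (1::'a)" by (simp add: ext_sign_def e1)
  have e2: "{(s, t). s = b \<and> t = a \<and> t < s} = {(b,a)}" using assms(3) by auto
  have s2: "ext_sign {b} {a} = (-1::'a)" by (simp add: ext_sign_def e2)
  have "(\<Sum>S\<in>Pow {a,b}. ext_sign S ({a,b} - S) * f S * g ({a,b} - S)) =
        (\<Sum>S\<in>{{a},{b}}. ext_sign S ({a,b} - S) * f S * g ({a,b} - S))"
  proof (rule sum.mono_neutral_right)
    have P: "Pow {a,b} = {{},{a,b},{a},{b}}" by blast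
    show "\<forall>i\<in>Pow {a, b} - {{a}, {b}}. ext_sign i ({a, b} - i) * f i * g ({a, b} - i) = 0"
      unfolding P using f0 by auto
  qed auto
  also have "\<dots> = ext_sign {a} {b} * f {a} * g {b} + ext_sign {b} {a} * f {b} * g {a}"
    using assms(3) by (auto simp: insert_Diff_if)
  finally show ?thesis by (simp add: wedge_def s1 s2)
qed


definition cell :: "nat \<Rightarrow> (nat \<Rightarrow> nat \<Rightarrow> nat) \<Rightarrow> nat \<Rightarrow> nat \<Rightarrow> nat set" where
  "cell m K i j = {i, m + j, 2*m + K i j}"

definition lines :: "nat \<Rightarrow> (nat \<Rightarrow> nat \<Rightarrow> nat) \<Rightarrow> nat set \<Rightarrow> nat set set" where
  "lines m K X = insert X {C \<in> CK m K. \<not> C \<subseteq> X}"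

definition ind :: "nat \<Rightarrow> (nat \<Rightarrow> nat \<Rightarrow> nat) \<Rightarrow> nat set \<Rightarrow> nat set \<Rightarrow> bool" where
  "ind m K X I \<longleftrightarrow> I \<subseteq> {1..3*m} \<and> (card I \<le> 2 \<or> (card I = 3 \<and> \<not> (\<exists>L\<in>lines m K X. I \<subseteq> L)))"

lemma CK_cell: "C \<in> CK m K \<longleftrightarrow> (\<exists>i\<in>{1..m}. \<exists>j\<in>{1..m}. C = cell m K i j)"
  unfolding CK_def cell_def by blast

context
  fixes m :: nat and K :: "nat \<Rightarrow> nat \<Rightarrow> nat" and Rs Cs Ss :: "nat set"
  assumes m2: "m \<ge> 2" and lat: "latin_square m K" and sub: "subsquare m K Rs Cs Ss"
    and small: "card Rs < m"
begin

lemma Krange: "i \<in> {1..m} \<Longrightarrow> j \<in> {1..m} \<Longrightarrow> K i j \<in> {1..m}"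
  using lat unfolding latin_square_def bij_betw_def by blast

lemma row_inj: "i \<in> {1..m} \<Longrightarrow> j \<in> {1..m} \<Longrightarrow> j' \<in> {1..m} \<Longrightarrow> K i j = K i j' \<Longrightarrow> j = j'"
  using lat unfolding latin_square_def bij_betw_def inj_on_def by blast

lemma col_inj: "j \<in> {1..m} \<Longrightarrow> i \<in> {1..m} \<Longrightarrow> i' \<in> {1..m} \<Longrightarrow> K i j = K i' j \<Longrightarrow> i = i'"
  using lat unfolding latin_square_def bij_betw_def inj_on_def by blast

lemma row_surj: "i \<in> {1..m} \<Longrightarrow> k \<in> {1..m} \<Longrightarrow> \<exists>j\<in>{1..m}. K i j = k"
  using lat unfolding latin_square_def bij_betw_def by (metis imageE)

lemma col_surj: "j \<in> {1..m} \<Longrightarrow> k \<in> {1..m} \<Longrightarrow> \<exists>i\<in>{1..m}. K i j = k"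
  using lat unfolding latin_square_def bij_betw_def by (metis imageE)

lemma sub_ranges: "Rs \<subseteq> {1..m}" "Cs \<subseteq> {1..m}" "Ss \<subseteq> {1..m}"
  using sub unfolding subsquare_def by auto

lemma cards: "card Cs = card Rs" "card Ss = card Rs"
  using sub unfolding subsquare_def by auto

lemma close1: "i \<in> Rs \<Longrightarrow> j \<in> Cs \<Longrightarrow> K i j \<in> Ss"
  using sub unfolding subsquare_def bij_betw_def by blast

lemma close2: assumes "i \<in> Rs" "j \<in> {1..m}" "K i j \<in> Ss" shows "j \<in> Cs"
proof -
  have "bij_betw (\<lambda>j. K i j) Cs Ss" using sub assms(1) unfolding subsquare_def by blast
  then obtain j' where "j' \<in> Cs" "K i j' = K i j" using assms(3) unfolding bij_betw_def by (metis imageE)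
  moreover have "i \<in> {1..m}" "j' \<in> {1..m}" using assms(1) \<open>j' \<in> Cs\<close> sub_ranges by auto
  ultimately show ?thesis using row_inj assms(2) by metis
qed

lemma close3: assumes "j \<in> Cs" "i \<in> {1..m}" "K i j \<in> Ss" shows "i \<in> Rs"
proof -
  have "bij_betw (\<lambda>i. K i j) Rs Ss" using sub assms(1) unfolding subsquare_def by blast
  then obtain i' where "i' \<in> Rs" "K i' j = K i j" using assms(3) unfolding bij_betw_def by (metis imageE)
  moreover have "j \<in> {1..m}" "i' \<in> {1..m}" using assms(1) \<open>i' \<in> Rs\<close> sub_ranges by auto
  ultimately show ?thesis using col_inj assms(2) by metis
qed

lemma out_of: assumes "A \<subseteq> {1..m}" "card A < m" shows "\<exists>r\<in>{1..m}. r \<notin> A"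
proof (rule ccontr)
  assume "\<not> ?thesis" then have "{1..m} \<subseteq> A" by blast
  then have "card {1..m} \<le> card A" using assms(1) finite_subset by (metis card_mono finite_atLeastAtMost)
  then show False using assms(2) by simp
qed

lemma exists_out: "\<exists>r\<in>{1..m}. r \<notin> Rs" "\<exists>c\<in>{1..m}. c \<notin> Cs" "\<exists>s\<in>{1..m}. s \<notin> Ss"
  using out_of sub_ranges cards small by auto

abbreviation "XX \<equiv> XJ m Rs Cs Ss"

lemma X_sub: "XX \<subseteq> {1..3*m}"
  using sub_ranges unfolding XJ_def by auto

lemma X_b1: "i \<in> {1..m} \<Longrightarrow> i \<in> XX \<longleftrightarrow> i \<in> Rs"
  using sub_ranges unfolding XJ_def by auto

lemma X_b2: "j \<in> {1..m} \<Longrightarrow> m + j \<in> XX \<longleftrightarrow> j \<in> Cs"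
  using sub_ranges unfolding XJ_def by auto

lemma X_b3: "k \<in> {1..m} \<Longrightarrow> 2*m + k \<in> XX \<longleftrightarrow> k \<in> Ss"
  using sub_ranges unfolding XJ_def by auto

lemma cell_sub: "i \<in> {1..m} \<Longrightarrow> j \<in> {1..m} \<Longrightarrow> cell m K i j \<subseteq> {1..3*m}"
  using Krange[of i j] unfolding cell_def by auto

lemma cell_card: "i \<in> {1..m} \<Longrightarrow> j \<in> {1..m} \<Longrightarrow> card (cell m K i j) = 3"
  using Krange[of i j] unfolding cell_def by auto

lemma cell_in_X: assumes "i \<in> {1..m}" "j \<in> {1..m}"
  shows "cell m K i j \<subseteq> XX \<longleftrightarrow> i \<in> Rs \<and> j \<in> Cs"
  using X_b1[OF assms(1)] X_b2[OF assms(2)] X_b3[OF Krange[OF assms]] close1[of i j]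
  unfolding cell_def by auto

lemma cell_pt: assumes "i \<in> {1..m}" "j \<in> {1..m}" "p \<in> cell m K i j"
  shows "(p \<le> m \<and> p = i) \<or> (m < p \<and> p \<le> 2*m \<and> p = m + j) \<or> (2*m < p \<and> p = 2*m + K i j)"
  using assms Krange[OF assms(1,2)] unfolding cell_def by auto

lemma cell_two_X: assumes "i \<in> {1..m}" "j \<in> {1..m}" "p \<in> cell m K i j" "q \<in> cell m K i j"
  "p \<noteq> q" "p \<in> XX" "q \<in> XX"
  shows "cell m K i j \<subseteq> XX"
proof -
  have k: "K i j \<in> {1..m}" using Krange assms(1,2) by blast
  have "(i \<in> Rs \<and> j \<in> Cs) \<or> (i \<in> Rs \<and> K i j \<in> Ss) \<or> (j \<in> Cs \<and> K i j \<in> Ss)"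
    using cell_pt[OF assms(1,2,3)] cell_pt[OF assms(1,2,4)] assms(5,6,7)
      X_b1[OF assms(1)] X_b2[OF assms(2)] X_b3[OF k] by auto
  then have "i \<in> Rs \<and> j \<in> Cs" using close2 close3 assms(1,2) by blast
  then show ?thesis using cell_in_X assms(1,2) by blast
qed

lemma cell_meet: assumes "i \<in> {1..m}" "j \<in> {1..m}" "i' \<in> {1..m}" "j' \<in> {1..m}"
  "p \<in> cell m K i j" "q \<in> cell m K i j" "p \<in> cell m K i' j'" "q \<in> cell m K i' j'" "p \<noteq> q"
  shows "cell m K i j = cell m K i' j'"
proof -
  have pt: "(x \<le> m \<and> x = i \<and> x = i') \<or> (m < x \<and> x \<le> 2*m \<and> x = m + j \<and> x = m + j') \<or>
      (2*m < x \<and> x = 2*m + K i j \<and> x = 2*m + K i' j')"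
    if "x \<in> cell m K i j" "x \<in> cell m K i' j'" for x
  proof -
    note A = cell_pt[OF assms(1,2) that(1)] and B = cell_pt[OF assms(3,4) that(2)]
    from A show ?thesis
    proof (elim disjE)
      assume "x \<le> m \<and> x = i" then show ?thesis using B by auto
    next
      assume "m < x \<and> x \<le> 2*m \<and> x = m + j" then show ?thesis using B by auto
    next
      assume "2*m < x \<and> x = 2*m + K i j" then show ?thesis using B by auto
    qed
  qed
  have "(i = i' \<and> j = j') \<or> (i = i' \<and> K i j = K i' j') \<or> (j = j' \<and> K i j = K i' j')"
    using pt[OF assms(5,7)] pt[OF assms(6,8)] assms(9) by auto
  then consider (a) "i = i' \<and> j = j'" | (b) "i = i' \<and> K i j = K i' j'" | (c) "j = j' \<and> K i j = K i' j'"
    by blast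
  then have "i = i' \<and> j = j'"
  proof cases
    case b then have "K i j = K i j'" by metis
    then have "j = j'" by (rule row_inj[OF assms(1,2,4)])
    with b show ?thesis by simp
  next
    case c then have "K i j = K i' j" by metis
    then have "i = i'" by (rule col_inj[OF assms(2,1,3)])
    with c show ?thesis by simp
  qed simp
  then show ?thesis by simp
qed

lemma lines_cases: "L \<in> lines m K XX \<Longrightarrow> L = XX \<or> (\<exists>i\<in>{1..m}. \<exists>j\<in>{1..m}. L = cell m K i j \<and> \<not> L \<subseteq> XX)"
  unfolding lines_def CK_cell by blast

lemma lines_sub: "L \<in> lines m K XX \<Longrightarrow> L \<subseteq> {1..3*m}"
  using lines_cases X_sub cell_sub by blast

lemma lines_meet: assumes "L1 \<in> lines m K XX" "L2 \<in> lines m K XX" "p \<in> L1" "q \<in> L1" "p \<in> L2" "q \<in> L2" "p \<noteq> q"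
  shows "L1 = L2"
proof -
  { fix L assume L: "L \<in> lines m K XX" "p \<in> L" "q \<in> L" "p \<in> XX" "q \<in> XX"
    have "L = XX"
      using lines_cases[OF L(1)] cell_two_X L assms(7) by blast }
  note a = this
  show ?thesis
  proof (cases "L1 = XX")
    case True then show ?thesis using a assms by metis
  next
    case False
    then obtain i j where ij: "i \<in> {1..m}" "j \<in> {1..m}" "L1 = cell m K i j" "\<not> L1 \<subseteq> XX"
      using lines_cases[OF assms(1)] by blast
    show ?thesis
    proof (cases "L2 = XX")
      case True then show ?thesis using a assms by metis
    next
      case False
      then obtain i' j' where ij': "i' \<in> {1..m}" "j' \<in> {1..m}" "L2 = cell m K i' j'"
        using lines_cases[OF assms(2)] by blast
      show ?thesis using cell_meet[OF ij(1,2) ij'(1,2)] ij ij' assms by blast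
    qed
  qed
qed

lemma ind_finite: "ind m K XX I \<Longrightarrow> finite I"
  unfolding ind_def using finite_subset by blast

lemma ind_card: "ind m K XX I \<Longrightarrow> card I \<le> 3"
  unfolding ind_def by auto

lemma ind_matroid: "matroid {1..3*m} (ind m K XX)"
  unfolding matroid_def
proof (intro conjI allI impI)
  show "ind m K XX {}" by (simp add: ind_def)
next
  fix I assume "ind m K XX I" then show "I \<subseteq> {1..3*m}" by (simp add: ind_def)
next
  fix I J assume h: "ind m K XX J \<and> I \<subseteq> J"
  then have fJ: "finite J" using ind_finite by blast
  have "card I \<le> card J" using h fJ card_mono by blast
  show "ind m K XX I"
  proof (cases "card I = card J")
    case True then have "I = J" using h fJ card_subset_eq by blast
    then show ?thesis using h by simp
  next
    case False then have "card I \<le> 2" using \<open>card I \<le> card J\<close> ind_card[of J] h by linarith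
    then show ?thesis using h unfolding ind_def by auto
  qed
next
  fix I J assume h: "ind m K XX I \<and> ind m K XX J \<and> card I < card J"
  then have fI: "finite I" and fJ: "finite J" using ind_finite by blast+
  have IE: "I \<subseteq> {1..3*m}" "J \<subseteq> {1..3*m}" using h unfolding ind_def by auto
  have "\<not> J \<subseteq> I" using h fI card_mono by (metis not_le)
  then obtain x0 where x0: "x0 \<in> J" "x0 \<notin> I" by blast
  have "card J \<le> 3" using h ind_card by blast
  then have cI: "card I \<le> 2" using h by linarith
  show "\<exists>x\<in>J - I. ind m K XX (insert x I)"
  proof (cases "card I \<le> 1")
    case True
    then have "card (insert x0 I) \<le> 2" using fI by (simp add: card_insert_if)
    then have "ind m K XX (insert x0 I)" using x0 IE unfolding ind_def by auto
    with x0 show ?thesis by blast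
  next
    case False
    then have c2: "card I = 2" using cI by simp
    then have cJ: "card J = 3" using h \<open>card J \<le> 3\<close> by linarith
    then have Jnl: "\<not> (\<exists>L\<in>lines m K XX. J \<subseteq> L)" using h unfolding ind_def by auto
    obtain p q where pq: "I = {p,q}" "p \<noteq> q" using c2 card_2_iff by metis
    show ?thesis
    proof (cases "\<exists>L\<in>lines m K XX. I \<subseteq> L")
      case True
      then obtain L where L: "L \<in> lines m K XX" "I \<subseteq> L" by blast
      then obtain x where x: "x \<in> J" "x \<notin> L" using Jnl by blast
      then have xI: "x \<notin> I" using L by blast
      have c3: "card (insert x I) = 3" using xI fI c2 by simp
      have "\<not> (\<exists>L'\<in>lines m K XX. insert x I \<subseteq> L')"
      proof
        assume "\<exists>L'\<in>lines m K XX. insert x I \<subseteq> L'"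
        then obtain L' where L': "L' \<in> lines m K XX" "insert x I \<subseteq> L'" by blast
        then have "L' = L" using lines_meet[OF L' (1) L(1), of p q] pq L by auto
        then show False using L' x by blast
      qed
      moreover have "insert x I \<subseteq> {1..3*m}" using x(1) IE by blast
      ultimately have "ind m K XX (insert x I)" unfolding ind_def using c3 by blast
      then show ?thesis using x(1) xI by blast
    next
      case False
      have c3: "card (insert x0 I) = 3" using x0 fI c2 by simp
      have "\<not> (\<exists>L'\<in>lines m K XX. insert x0 I \<subseteq> L')" using False by blast
      moreover have "insert x0 I \<subseteq> {1..3*m}" using x0(1) IE by blast
      ultimately have "ind m K XX (insert x0 I)" unfolding ind_def using c3 by blast
      then show ?thesis using x0 by blast
    qed
  qed
qed simp

lemma circuit_props: assumes "C \<in> circuits {1..3*m} (ind m K XX)"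
  shows "finite C" "3 \<le> card C" "card C = 3 \<Longrightarrow> \<exists>L\<in>lines m K XX. C \<subseteq> L"
proof -
  have h: "C \<subseteq> {1..3*m}" "\<not> ind m K XX C" using assms unfolding circuits_def by auto
  show "finite C" using h finite_subset by blast
  show "3 \<le> card C" using h unfolding ind_def by auto
  show "card C = 3 \<Longrightarrow> \<exists>L\<in>lines m K XX. C \<subseteq> L" using h unfolding ind_def by auto
qed

lemma CK_circuits: assumes "C \<in> CK m K" shows "C \<in> circuits {1..3*m} (ind m K XX)" "card C = 3"
proof -
  obtain i j where ij: "i \<in> {1..m}" "j \<in> {1..m}" "C = cell m K i j" using assms CK_cell by blast
  have sE: "C \<subseteq> {1..3*m}" and c3: "card C = 3" using cell_sub cell_card ij by auto
  have "\<exists>L\<in>lines m K XX. C \<subseteq> L"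
  proof (cases "C \<subseteq> XX")
    case True then show ?thesis by (auto simp: lines_def)
  next
    case False then have "C \<in> lines m K XX" using assms by (simp add: lines_def)
    then show ?thesis by blast
  qed
  then have "\<not> ind m K XX C" using c3 unfolding ind_def by auto
  moreover have "ind m K XX D" if "D \<subset> C" for D
  proof -
    have "card D < 3" using that c3 psubset_card_mono sE finite_subset by (metis finite_atLeastAtMost)
    then show ?thesis using that sE unfolding ind_def by auto
  qed
  ultimately show "C \<in> circuits {1..3*m} (ind m K XX)" using sE unfolding circuits_def by auto
  show "card C = 3" by (fact c3)
qed

lemma rank3: "mrank (ind m K XX) {1..3*m} = 3"
  unfolding mrank_def
proof (rule Max_eqI)
  show "finite {card I |I. I \<subseteq> {1..3 * m} \<and> ind m K XX I}"
    by (rule finite_subset[of _ "{0..3}"]) (auto dest: ind_card)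
next
  fix y assume "y \<in> {card I |I. I \<subseteq> {1..3 * m} \<and> ind m K XX I}"
  then show "y \<le> 3" using ind_card by auto
next
  obtain r where r: "r \<in> {1..m}" "r \<notin> Rs" using exists_out by blast
  define a :: nat where "a = (if r = 1 then 2 else 1)"
  have a: "a \<in> {1..m}" "a \<noteq> r" using m2 r unfolding a_def by auto
  define T where "T = {r, a, m + 1}"
  have TE: "T \<subseteq> {1..3*m}" using r a m2 unfolding T_def by auto
  have cT: "card T = 3" using r a m2 unfolding T_def by auto
  have "\<not> (\<exists>L\<in>lines m K XX. T \<subseteq> L)"
  proof
    assume "\<exists>L\<in>lines m K XX. T \<subseteq> L"
    then obtain L where L: "L \<in> lines m K XX" "T \<subseteq> L" by blast
    show False
    proof (cases "L = XX")
      case True then show False using L r X_b1 unfolding T_def by auto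
    next
      case False
      then obtain i j where ij: "i \<in> {1..m}" "j \<in> {1..m}" "L = cell m K i j"
        using lines_cases[OF L(1)] by blast
      have "r = i" "a = i" using cell_pt[OF ij(1,2), of r] cell_pt[OF ij(1,2), of a] L(2) ij(3) r a
        unfolding T_def by auto
      then show False using a by simp
    qed
  qed
  then have "ind m K XX T" using TE cT unfolding ind_def by auto
  then show "3 \<in> {card I |I. I \<subseteq> {1..3 * m} \<and> ind m K XX I}" using TE cT by (metis (mono_tags, lifting) mem_Collect_eq)
qed

lemma degen: "degeneration_of_MK m K (ind m K XX)"
  unfolding degeneration_of_MK_def
  using ind_matroid rank3 CK_circuits by (auto simp: loopless_def ind_def)

lemma simple: "simple_matroid {1..3*m} (ind m K XX)"
  unfolding simple_matroid_def ind_def by auto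

lemma unif: "restriction_uniform2 (ind m K XX) XX"
  unfolding restriction_uniform2_def
proof (intro allI impI)
  fix Y assume Y: "Y \<subseteq> XX"
  have "XX \<in> lines m K XX" by (simp add: lines_def)
  then show "ind m K XX Y = (card Y \<le> 2)" using Y X_sub unfolding ind_def by auto
qed

end


lemma doubleton_ord: "(a::nat) < b \<Longrightarrow> c < d \<Longrightarrow> ({a,b} = {c,d}) = (a = c \<and> b = d)"
  by (auto simp: doubleton_eq_iff)

lemma sum_unique: "finite A \<Longrightarrow> (\<And>p. p \<in> A \<Longrightarrow> P p \<longleftrightarrow> p = p0) \<Longrightarrow>
   (\<Sum>p\<in>A. if P p then (1::'a::comm_ring_1) else 0) = (if p0 \<in> A then 1 else 0)"
proof -
  assume "finite A" "\<And>p. p \<in> A \<Longrightarrow> P p \<longleftrightarrow> p = p0"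
  then have "(\<Sum>p\<in>A. if P p then (1::'a) else 0) = (\<Sum>p\<in>A. if p = p0 then 1 else 0)"
    by (intro sum.cong) auto
  also have "\<dots> = (if p0 \<in> A then 1 else 0)" using \<open>finite A\<close> by (simp add: sum.delta')
  finally show ?thesis .
qed

lemma sum_none: "(\<And>p. p \<in> A \<Longrightarrow> \<not> P p) \<Longrightarrow> (\<Sum>p\<in>A. if P p then (1::'a::comm_ring_1) else 0) = 0"
  by (intro sum.neutral) auto

lemma Edeg_hom: assumes "f \<in> Edeg n p" shows "hom p f"
  unfolding hom_def
proof (intro allI impI)
  fix U assume "f U \<noteq> 0"
  then have "U \<subseteq> {1..n} \<and> card U = p" using assms unfolding Edeg_def by blast
  then show "finite U \<and> card U = p" using finite_subset by blast
qed

context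
  fixes m :: nat and K :: "nat \<Rightarrow> nat \<Rightarrow> nat" and Rs Cs Ss :: "nat set"
  assumes m2: "m \<ge> 2" and lat: "latin_square m K" and sub: "subsquare m K Rs Cs Ss"
    and small: "card Rs < m"
begin

abbreviation "XQ \<equiv> XJ m Rs Cs Ss"
abbreviation "Circ \<equiv> circuits {1..3*m} (ind m K XQ)"
abbreviation "Gens \<equiv> {wedge (wedge (ebas S) (bd C)) (ebas T) | S C T. S \<subseteq> {1..3*m} \<and> T \<subseteq> {1..3*m} \<and> C \<in> Circ}"

lemmas facts = lines_meet[OF m2 lat sub small] circuit_props[OF m2 lat sub small]
  CK_circuits[OF m2 lat sub small] cell_pt[OF m2 lat sub small] cell_in_X[OF m2 lat sub small]
  lines_cases[OF m2 lat sub small]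

lemma Circ_ok: "C \<in> Circ \<Longrightarrow> finite C \<and> 3 \<le> card C"
  using circuit_props[OF m2 lat sub small] by blast

lemma ideal_def': "os_ideal (3*m) Circ = module.span escale Gens"
  unfolding os_ideal_def by simp

lemma gen_char': "g \<in> Gens \<Longrightarrow> (\<forall>U. g U \<noteq> 0 \<longrightarrow> finite U \<and> 2 \<le> card U) \<and>
         (\<forall>U. card U = 2 \<longrightarrow> g U \<noteq> 0 \<longrightarrow> (\<exists>C\<in>Circ. card C = 3 \<and> g = bd C))"
  by (rule gen_char[of Circ]) (use Circ_ok in auto)

lemma ideal_low: assumes "y \<in> os_ideal (3*m) Circ" "infinite U \<or> card U \<le> 1"
  shows "y U = 0"
proof (rule span_vanish[of "\<lambda>y. y U" Gens y])
  show "y \<in> module.span escale Gens" using assms(1) unfolding os_ideal_def by simp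
  fix g assume g: "g \<in> Gens"
  have "\<forall>U. g U \<noteq> 0 \<longrightarrow> finite U \<and> 2 \<le> card U" using gen_char'[OF g] by blast
  then show "g U = 0" using assms(2) by (cases "g U = 0") auto
qed simp_all

lemma ideal_pair: assumes "y \<in> os_ideal (3*m) Circ" "a < b" "\<not> (\<exists>L\<in>lines m K XQ. {a,b} \<subseteq> L)"
  shows "y {a,b} = 0"
proof (rule span_vanish[of "\<lambda>y. y {a,b}" Gens y])
  show "y \<in> module.span escale Gens" using assms(1) unfolding os_ideal_def by simp
  fix g assume g: "g \<in> Gens"
  show "g {a,b} = 0"
  proof (rule ccontr)
    assume nz: "g {a,b} \<noteq> 0"
    have "card {a,b} = 2" using assms(2) by simp
    then obtain C where C: "C \<in> Circ" "card C = 3" "g = bd C" using gen_char'[OF g] nz by blast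
    then obtain c where "c \<in> C" "{a,b} = C - {c}" using bd_nz nz by metis
    then have "{a,b} \<subseteq> C" by blast
    moreover obtain L where "L \<in> lines m K XQ" "C \<subseteq> L" using circuit_props(3)[OF m2 lat sub small C(1)] C(2) by blast
    ultimately show False using assms(3) by blast
  qed
qed simp_all

lemma gen_line: assumes g: "g \<in> Gens" and ij: "i \<in> {1..m}" "j \<in> {1..m}" and nX: "\<not> cell m K i j \<subseteq> XQ"
  shows "(g {i, m+j} = 0 \<and> g {i, 2*m + K i j} = 0 \<and> g {m+j, 2*m + K i j} = 0) \<or> g = bd (cell m K i j)"
proof -
  have k: "K i j \<in> {1..m}" using Krange[OF m2 lat sub small] ij by blast
  have L0: "cell m K i j \<in> lines m K XQ" using nX ij unfolding lines_def CK_cell by blast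
  have c3: "card (cell m K i j) = 3" using cell_card[OF m2 lat sub small] ij by blast
  { fix U assume U: "U \<subseteq> cell m K i j" "card U = 2" "g U \<noteq> 0"
    then obtain C where C: "C \<in> Circ" "card C = 3" "g = bd C" using gen_char'[OF g] by blast
    then obtain c where "c \<in> C" "U = C - {c}" using bd_nz U(3) by metis
    then have UC: "U \<subseteq> C" by blast
    obtain L where L: "L \<in> lines m K XQ" "C \<subseteq> L" using circuit_props(3)[OF m2 lat sub small C(1)] C(2) by blast
    obtain p q where pq: "U = {p,q}" "p \<noteq> q" using U(2) card_2_iff by metis
    have "L = cell m K i j" using lines_meet[OF m2 lat sub small L(1) L0, of p q] pq U(1) UC L(2) by blast
    then have "C = cell m K i j" using C(2) c3 L(2) card_subset_eq
      by (metis cell_sub[OF m2 lat sub small ij(1,2)] finite_atLeastAtMost finite_subset)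
    then have "g = bd (cell m K i j)" using C by simp }
  note * = this
  have "card {i, m+j} = 2" "card {i, 2*m + K i j} = 2" "card {m+j, 2*m + K i j} = 2"
    using ij k by auto
  moreover have "{i, m+j} \<subseteq> cell m K i j" "{i, 2*m + K i j} \<subseteq> cell m K i j" "{m+j, 2*m + K i j} \<subseteq> cell m K i j"
    unfolding cell_def by auto
  ultimately show ?thesis using * by blast
qed

lemma bd_cell: assumes "i \<in> {1..m}" "j \<in> {1..m}"
  shows "bd (cell m K i j) U = (if U = {m+j, 2*m + K i j} then 1 else 0) + (if U = {i, 2*m + K i j} then -1 else 0) + (if U = {i, m+j} then 1 else 0)"
proof -
  have k: "K i j \<in> {1..m}" using Krange[OF m2 lat sub small] assms by blast
  show ?thesis unfolding cell_def by (rule bd3) (use assms k in auto)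
qed

lemma ideal_line: assumes y: "(y :: nat set \<Rightarrow> 'a::field) \<in> os_ideal (3*m) Circ" and ij: "i \<in> {1..m}" "j \<in> {1..m}" and nX: "\<not> cell m K i j \<subseteq> XQ"
  shows "y {i, m+j} + y {i, 2*m + K i j} = 0" "y {m+j, 2*m + K i j} - y {i, m+j} = 0"
        "y {i, 2*m + K i j} + y {m+j, 2*m + K i j} = 0"
proof -
  have k: "K i j \<in> {1..m}" using Krange[OF m2 lat sub small] ij by blast
  have ne: "{i, m+j} \<noteq> {m+j, 2*m + K i j}" "{i, m+j} \<noteq> {i, 2*m + K i j}" "{i, 2*m + K i j} \<noteq> {m+j, 2*m + K i j}"
    "{i, 2*m + K i j} \<noteq> {i, m+j}" "{m+j, 2*m + K i j} \<noteq> {i, m+j}" "{m+j, 2*m + K i j} \<noteq> {i, 2*m + K i j}"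
    using ij k by (auto simp: doubleton_eq_iff)
  have v: "bd (cell m K i j) {i, m+j} = (1::'a)" "bd (cell m K i j) {i, 2*m + K i j} = (-1::'a)"
     "bd (cell m K i j) {m+j, 2*m + K i j} = (1::'a)"
    unfolding bd_cell[OF ij] using ne by simp_all
  have yS: "y \<in> module.span escale Gens" using y unfolding os_ideal_def by simp
  show "y {i, m+j} + y {i, 2*m + K i j} = 0"
  proof (rule span_vanish[OF _ _ _ yS])
    fix g :: "nat set \<Rightarrow> 'a" assume "g \<in> Gens"
    from gen_line[OF this ij nX] show "g {i, m+j} + g {i, 2*m + K i j} = 0" using v by auto
  qed (simp_all add: algebra_simps)
  show "y {m+j, 2*m + K i j} - y {i, m+j} = 0"
  proof (rule span_vanish[OF _ _ _ yS])
    fix g :: "nat set \<Rightarrow> 'a" assume "g \<in> Gens"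
    from gen_line[OF this ij nX] show "g {m+j, 2*m + K i j} - g {i, m+j} = 0" using v by auto
  qed (simp_all add: algebra_simps)
  show "y {i, 2*m + K i j} + y {m+j, 2*m + K i j} = 0"
  proof (rule span_vanish[OF _ _ _ yS])
    fix g :: "nat set \<Rightarrow> 'a" assume "g \<in> Gens"
    from gen_line[OF this ij nX] show "g {i, 2*m + K i j} + g {m+j, 2*m + K i j} = 0" using v by auto
  qed (simp_all add: algebra_simps)
qed

end


lemma oneform_sing: "oneform m a b c {p} = (if 1 \<le> p \<and> p \<le> m then a else if m < p \<and> p \<le> 2*m then b
   else if 2*m < p \<and> p \<le> 3*m then c else 0)"
  unfolding oneform_def by auto

lemma oneform_nonsing: "\<not> (\<exists>p. S = {p}) \<Longrightarrow> oneform m a b c S = 0"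
  unfolding oneform_def by auto

lemma oneform_zero: "oneform m 0 0 0 = 0"
  unfolding oneform_def by (auto simp: fun_eq_iff)

lemma oneform_Edeg: "oneform m a b c \<in> Edeg (3*m) 1"
  unfolding Edeg_def
proof (intro CollectI allI impI)
  fix S assume h: "oneform m a b c S \<noteq> 0"
  then obtain p where S: "S = {p}" using oneform_nonsing by blast
  then have "1 \<le> p \<and> p \<le> 3*m" using h by (auto simp: oneform_sing split: if_splits)
  then show "S \<subseteq> {1..3*m} \<and> card S = 1" using S by auto
qed

lemma Edeg1_eq:
  assumes x: "x \<in> Edeg (3*m) 1" and v: "\<And>t. t \<in> {1..m} \<Longrightarrow> x {t} = a \<and> x {m+t} = b \<and> x {2*m+t} = c"
  shows "x = oneform m a b c"
proof (rule ext)
  fix S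
  show "x S = oneform m a b c S"
  proof (cases "\<exists>p. S = {p}")
    case True
    then obtain p where S: "S = {p}" by blast
    consider (o) "p = 0 \<or> 3*m < p" | (b1) "1 \<le> p \<and> p \<le> m" | (b2) "m < p \<and> p \<le> 2*m" | (b3) "2*m < p \<and> p \<le> 3*m"
      by linarith
    then show ?thesis
    proof cases
      case o
      then have "x {p} = 0" using x unfolding Edeg_def by force
      then show ?thesis using o S by (auto simp: oneform_sing)
    next
      case b1 then show ?thesis using v[of p] S by (simp add: oneform_sing)
    next
      case b2 then have "p = m + (p - m)" "p - m \<in> {1..m}" by auto
      then show ?thesis using v[of "p - m"] S b2 by (simp add: oneform_sing)
    next
      case b3 then have "p = 2*m + (p - 2*m)" "p - 2*m \<in> {1..m}" by auto
      then show ?thesis using v[of "p - 2*m"] S b3 by (simp add: oneform_sing)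
    qed
  next
    case False
    have "x S = 0"
    proof (rule ccontr)
      assume "x S \<noteq> 0" then have "card S = 1" using x unfolding Edeg_def by blast
      then show False using False card_1_singletonE by metis
    qed
    then show ?thesis using oneform_nonsing[OF False] by simp
  qed
qed


context
  fixes m :: nat and K :: "nat \<Rightarrow> nat \<Rightarrow> nat" and Rs Cs Ss :: "nat set"
  assumes m2: "m \<ge> 2" and lat: "latin_square m K" and sub: "subsquare m K Rs Cs Ss"
    and small: "card Rs < m"
  fixes l1 l2 l3 :: "'a::field"
  assumes sum0: "l1 + l2 + l3 = 0" and nzw: "oneform m l1 l2 l3 \<noteq> 0"
begin

abbreviation "XD \<equiv> XJ m Rs Cs Ss"
abbreviation "IdlD \<equiv> os_ideal (3*m) (circuits {1..3*m} (ind m K XD)) :: (nat set \<Rightarrow> 'a) set"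
abbreviation "ww \<equiv> oneform m l1 l2 l3"

lemma two_nz: "(l1 \<noteq> 0 \<and> l2 \<noteq> 0) \<or> (l1 \<noteq> 0 \<and> l3 \<noteq> 0) \<or> (l2 \<noteq> 0 \<and> l3 \<noteq> 0)"
proof (rule ccontr)
  assume "\<not> ?thesis"
  then have "l1 = 0 \<and> l2 = 0 \<and> l3 = 0" using sum0
    by (metis add.commute add.right_neutral add_cancel_right_left)
  then show False using nzw oneform_zero by metis
qed

lemma hw: "hom 1 ww" using Edeg_hom oneform_Edeg by blast

lemma no_line: assumes "p \<noteq> q" "p \<notin> XD"
  and sb: "(p \<le> m \<and> q \<le> m) \<or> (m < p \<and> p \<le> 2*m \<and> m < q \<and> q \<le> 2*m) \<or> (2*m < p \<and> 2*m < q)"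
  shows "\<not> (\<exists>L\<in>lines m K XD. {p,q} \<subseteq> L)"
proof
  assume "\<exists>L\<in>lines m K XD. {p,q} \<subseteq> L"
  then obtain L where L: "L \<in> lines m K XD" "{p,q} \<subseteq> L" by blast
  show False
  proof (cases "L = XD")
    case True then show False using L assms(2) by blast
  next
    case False
    then obtain i j where ij: "i \<in> {1..m}" "j \<in> {1..m}" "L = cell m K i j"
      using lines_cases[OF m2 lat sub small L(1)] by blast
    have "p \<in> cell m K i j" "q \<in> cell m K i j" using L ij by auto
    from cell_pt[OF m2 lat sub small ij(1,2) this(1)] cell_pt[OF m2 lat sub small ij(1,2) this(2)]
    show False using sb assms(1) by auto
  qed
qed

lemma const_block:
  assumes x: "hom 1 x" and y: "wedge ww x \<in> IdlD" and "p \<noteq> q" "p \<notin> XD"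
  and sb: "(p \<le> m \<and> q \<le> m) \<or> (m < p \<and> p \<le> 2*m \<and> m < q \<and> q \<le> 2*m) \<or> (2*m < p \<and> 2*m < q)"
  shows "ww {p} * x {q} = ww {q} * x {p}"
proof (cases "p < q")
  case True
  have "wedge ww x {p,q} = 0"
    by (rule ideal_pair[OF m2 lat sub small y True no_line[OF assms(3,4) sb]])
  then show ?thesis using wedge11[OF hw x True] by simp
next
  case False
  then have lt: "q < p" using assms(3) by simp
  have nl: "\<not> (\<exists>L\<in>lines m K XD. {q,p} \<subseteq> L)" using no_line[OF assms(3,4) sb] by (simp add: insert_commute)
  have "wedge ww x {q,p} = 0"
    by (rule ideal_pair[OF m2 lat sub small y lt nl])
  then show ?thesis using wedge11[OF hw x lt] by simp
qed

lemma eps_zero: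
  assumes x: "hom 1 x" and y: "wedge ww x \<in> IdlD" and ij: "i \<in> {1..m}" "j \<in> {1..m}"
    and nR: "\<not> (i \<in> Rs \<and> j \<in> Cs)"
  shows "x {i} + x {m+j} + x {2*m + K i j} = 0"
proof -
  have k: "K i j \<in> {1..m}" using Krange[OF m2 lat sub small] ij by blast
  have nX: "\<not> cell m K i j \<subseteq> XD" using cell_in_X[OF m2 lat sub small ij] nR by blast
  note e = ideal_line[OF m2 lat sub small y ij nX]
  have o: "i < m + j" "m + j < 2*m + K i j" "i < 2*m + K i j" using ij k by auto
  have wv: "ww {i} = l1" "ww {m+j} = l2" "ww {2*m + K i j} = l3" using ij k by (auto simp: oneform_sing)
  note v = wedge11[OF hw x o(1)] wedge11[OF hw x o(2)] wedge11[OF hw x o(3)]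
  define \<epsilon> where "\<epsilon> = x {i} + x {m+j} + x {2*m + K i j}"
  have l3e: "l3 = - l1 - l2" using sum0 by (simp add: algebra_simps eq_neg_iff_add_eq_0)
  have f1: "l1 * x {m+j} - l2 * x {i} + (l1 * x {2*m + K i j} - l3 * x {i}) = 0"
    using e(1) by (simp only: v wv)
  have f2: "l2 * x {2*m + K i j} - l3 * x {m+j} - (l1 * x {m+j} - l2 * x {i}) = 0"
    using e(2) by (simp only: v wv)
  have f3: "l1 * x {2*m + K i j} - l3 * x {i} + (l2 * x {2*m + K i j} - l3 * x {m+j}) = 0"
    using e(3) by (simp only: v wv)
  have "l1 * \<epsilon> = 0" using f1 unfolding \<epsilon>_def l3e by (simp add: algebra_simps)
  moreover have "l2 * \<epsilon> = 0" using f2 unfolding \<epsilon>_def l3e by (simp add: algebra_simps)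
  moreover have "l3 * \<epsilon> = 0"
  proof -
    have "l3 * \<epsilon> = (l1+l2+l3) * x {2*m + K i j} - (l1 * x {2*m + K i j} - l3 * x {i} + (l2 * x {2*m + K i j} - l3 * x {m+j}))"
      unfolding \<epsilon>_def by (simp add: algebra_simps)
    then show ?thesis using f3 sum0 by simp
  qed
  ultimately show ?thesis using two_nz unfolding \<epsilon>_def by auto
qed

end


context
  fixes m :: nat and K :: "nat \<Rightarrow> nat \<Rightarrow> nat" and Rs Cs Ss :: "nat set"
  assumes m2: "m \<ge> 2" and lat: "latin_square m K" and sub: "subsquare m K Rs Cs Ss"
    and small: "card Rs < m"
  fixes l1 l2 l3 :: "'a::field"
  assumes sum0: "l1 + l2 + l3 = 0" and nzw: "oneform m l1 l2 l3 \<noteq> 0"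
begin

lemmas A_E = m2 lat sub small
lemmas AL_E = m2 lat sub small sum0 nzw

lemma Z_sub_V:
  assumes xE: "(x :: nat set \<Rightarrow> 'a) \<in> Edeg (3*m) 1"
    and y: "wedge (oneform m l1 l2 l3) x \<in> os_ideal (3*m) (circuits {1..3*m} (ind m K (XJ m Rs Cs Ss)))"
  shows "\<exists>a b c. a + b + c = 0 \<and> x = oneform m a b c"
proof -
  have x: "hom 1 x" using Edeg_hom xE by blast
  obtain r where r: "r \<in> {1..m}" "r \<notin> Rs" using exists_out[OF A_E] by blast
  obtain c where c: "c \<in> {1..m}" "c \<notin> Cs" using exists_out[OF A_E] by blast
  obtain s where s: "s \<in> {1..m}" "s \<notin> Ss" using exists_out[OF A_E] by blast
  have wv: "oneform m l1 l2 l3 {t} = l1" "oneform m l1 l2 l3 {m+t} = l2" "oneform m l1 l2 l3 {2*m+t} = l3"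
    if "t \<in> {1..m}" for t using that by (auto simp: oneform_sing)
  have B1: "x {t} = x {r}" if "l1 \<noteq> 0" "t \<in> {1..m}" for t
  proof (cases "t = r")
    case False
    have rX: "r \<notin> XJ m Rs Cs Ss" using X_b1[OF A_E r(1)] r(2) by blast
    have "oneform m l1 l2 l3 {r} * x {t} = oneform m l1 l2 l3 {t} * x {r}"
      by (rule const_block[OF AL_E x y]) (use False rX r that in auto)
    then show ?thesis using wv[OF r(1)] wv[OF that(2)] that(1) by simp
  qed simp
  have B2: "x {m+t} = x {m+c}" if "l2 \<noteq> 0" "t \<in> {1..m}" for t
  proof (cases "t = c")
    case False
    have cX: "m + c \<notin> XJ m Rs Cs Ss" using X_b2[OF A_E c(1)] c(2) by blast
    have "oneform m l1 l2 l3 {m+c} * x {m+t} = oneform m l1 l2 l3 {m+t} * x {m+c}"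
      by (rule const_block[OF AL_E x y]) (use False cX c that in auto)
    then show ?thesis using wv[OF c(1)] wv[OF that(2)] that(1) by simp
  qed simp
  have B3: "x {2*m+t} = x {2*m+s}" if "l3 \<noteq> 0" "t \<in> {1..m}" for t
  proof (cases "t = s")
    case False
    have sX: "2*m + s \<notin> XJ m Rs Cs Ss" using X_b3[OF A_E s(1)] s(2) by blast
    have "oneform m l1 l2 l3 {2*m+s} * x {2*m+t} = oneform m l1 l2 l3 {2*m+t} * x {2*m+s}"
      by (rule const_block[OF AL_E x y]) (use False sX s that in auto)
    then show ?thesis using wv[OF s(1)] wv[OF that(2)] that(1) by simp
  qed simp
  have E: "x {i} + x {m+j} + x {2*m + K i j} = 0" if "i \<in> {1..m}" "j \<in> {1..m}" "\<not> (i \<in> Rs \<and> j \<in> Cs)" for i j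
    by (rule eps_zero[OF AL_E x y that])
  consider (ca) "l1 \<noteq> 0 \<and> l2 \<noteq> 0" | (cb) "l1 \<noteq> 0 \<and> l3 \<noteq> 0" | (cc) "l2 \<noteq> 0 \<and> l3 \<noteq> 0"
    using two_nz[OF AL_E] by blast
  then show ?thesis
  proof cases
    case ca
    have "x = oneform m (x {r}) (x {m+c}) (- x {r} - x {m+c})"
    proof (rule Edeg1_eq[OF xE])
      fix t assume t: "t \<in> {1..m}"
      obtain j where j: "j \<in> {1..m}" "K r j = t" using row_surj[OF A_E r(1) t] by blast
      have "x {r} + x {m+j} + x {2*m + K r j} = 0" using E[OF r(1) j(1)] r(2) by blast
      then show "x {t} = x {r} \<and> x {m+t} = x {m+c} \<and> x {2*m+t} = - x {r} - x {m+c}"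
        using B1[OF _ t] B2[OF _ t] B2[OF _ j(1)] ca j(2) by (simp add: algebra_simps eq_neg_iff_add_eq_0)
    qed
    then show ?thesis by (intro exI[of _ "x {r}"] exI[of _ "x {m+c}"] exI[of _ "- x {r} - x {m+c}"]) simp
  next
    case cb
    have "x = oneform m (x {r}) (- x {r} - x {2*m+s}) (x {2*m+s})"
    proof (rule Edeg1_eq[OF xE])
      fix t assume t: "t \<in> {1..m}"
      have k: "K r t \<in> {1..m}" using Krange[OF A_E r(1) t] .
      have "x {r} + x {m+t} + x {2*m + K r t} = 0" using E[OF r(1) t] r(2) by blast
      then show "x {t} = x {r} \<and> x {m+t} = - x {r} - x {2*m+s} \<and> x {2*m+t} = x {2*m+s}"
        using B1[OF _ t] B3[OF _ t] B3[OF _ k] cb by (simp add: algebra_simps eq_neg_iff_add_eq_0)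
    qed
    then show ?thesis by (intro exI[of _ "x {r}"] exI[of _ "- x {r} - x {2*m+s}"] exI[of _ "x {2*m+s}"]) simp
  next
    case cc
    have "x = oneform m (- x {m+c} - x {2*m+s}) (x {m+c}) (x {2*m+s})"
    proof (rule Edeg1_eq[OF xE])
      fix t assume t: "t \<in> {1..m}"
      have k: "K t c \<in> {1..m}" using Krange[OF A_E t c(1)] .
      have "x {t} + x {m+c} + x {2*m + K t c} = 0" using E[OF t c(1)] c(2) by blast
      then show "x {t} = - x {m+c} - x {2*m+s} \<and> x {m+t} = x {m+c} \<and> x {2*m+t} = x {2*m+s}"
        using B2[OF _ t] B3[OF _ t] B3[OF _ k] cc by (simp add: algebra_simps eq_neg_iff_add_eq_0)
    qed
    then show ?thesis by (intro exI[of _ "- x {m+c} - x {2*m+s}"] exI[of _ "x {m+c}"] exI[of _ "x {2*m+s}"]) simp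
  qed
qed

end


context
  fixes m :: nat and K :: "nat \<Rightarrow> nat \<Rightarrow> nat" and Rs Cs Ss :: "nat set"
  assumes m2: "m \<ge> 2" and lat: "latin_square m K" and sub: "subsquare m K Rs Cs Ss"
    and small: "card Rs < m"
begin

lemmas A_F = m2 lat sub small

abbreviation "Sq \<equiv> {1..m} \<times> {1..m}"

lemma cnt12: "(\<Sum>p\<in>Sq. if a = fst p \<and> b = m + snd p then (1::'a::comm_ring_1) else 0) =
   (if a \<in> {1..m} \<and> m < b \<and> b \<le> 2*m then 1 else 0)"
proof (cases "a \<in> {1..m} \<and> m < b \<and> b \<le> 2*m")
  case True
  have "(\<Sum>p\<in>Sq. if a = fst p \<and> b = m + snd p then (1::'a) else 0) = (if (a, b - m) \<in> Sq then 1 else 0)"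
    by (rule sum_unique) (use True in auto)
  then show ?thesis using True by auto
next
  case False
  show ?thesis using False by (subst sum_none) auto
qed

lemma cnt13: "(\<Sum>p\<in>Sq. if a = fst p \<and> b = 2*m + K (fst p) (snd p) then (1::'a::comm_ring_1) else 0) =
   (if a \<in> {1..m} \<and> 2*m < b \<and> b \<le> 3*m then 1 else 0)"
proof (cases "a \<in> {1..m} \<and> 2*m < b \<and> b \<le> 3*m")
  case True
  then have "b - 2*m \<in> {1..m}" by auto
  then obtain j where j: "j \<in> {1..m}" "K a j = b - 2*m" using row_surj[OF A_F] True by blast
  have "(\<Sum>p\<in>Sq. if a = fst p \<and> b = 2*m + K (fst p) (snd p) then (1::'a) else 0) = (if (a, j) \<in> Sq then 1 else 0)"
  proof (rule sum_unique)
    fix p assume p: "p \<in> Sq"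
    show "(a = fst p \<and> b = 2*m + K (fst p) (snd p)) = (p = (a, j))"
    proof
      assume h: "a = fst p \<and> b = 2*m + K (fst p) (snd p)"
      then have "K a (snd p) = K a j" using j True by auto
      then have "snd p = j" using row_inj[OF A_F _ _ j(1)] p True by auto
      then show "p = (a, j)" using h by (cases p) auto
    next
      assume "p = (a, j)" then show "a = fst p \<and> b = 2*m + K (fst p) (snd p)" using j True by auto
    qed
  qed simp
  then show ?thesis using True j by auto
next
  case False
  show ?thesis
  proof (subst sum_none)
    fix p assume p: "p \<in> Sq"
    have "K (fst p) (snd p) \<in> {1..m}" using Krange[OF A_F] p by (cases p) auto
    then show "\<not> (a = fst p \<and> b = 2*m + K (fst p) (snd p))" using False p by (cases p) auto
  qed (use False in auto)
qed

lemma cnt23: "(\<Sum>p\<in>Sq. if a = m + snd p \<and> b = 2*m + K (fst p) (snd p) then (1::'a::comm_ring_1) else 0) =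
   (if m < a \<and> a \<le> 2*m \<and> 2*m < b \<and> b \<le> 3*m then 1 else 0)"
proof (cases "m < a \<and> a \<le> 2*m \<and> 2*m < b \<and> b \<le> 3*m")
  case True
  then have jj: "a - m \<in> {1..m}" "b - 2*m \<in> {1..m}" by auto
  then obtain i where i: "i \<in> {1..m}" "K i (a - m) = b - 2*m" using col_surj[OF A_F] by blast
  have "(\<Sum>p\<in>Sq. if a = m + snd p \<and> b = 2*m + K (fst p) (snd p) then (1::'a) else 0) = (if (i, a - m) \<in> Sq then 1 else 0)"
  proof (rule sum_unique)
    fix p assume p: "p \<in> Sq"
    show "(a = m + snd p \<and> b = 2*m + K (fst p) (snd p)) = (p = (i, a - m))"
    proof
      assume h: "a = m + snd p \<and> b = 2*m + K (fst p) (snd p)"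
      then have sp: "snd p = a - m" by auto
      then have "K (fst p) (a - m) = K i (a - m)" using h i by auto
      then have "fst p = i" using col_inj[OF A_F jj(1) _ i(1)] p by auto
      then show "p = (i, a - m)" using sp by (cases p) auto
    next
      assume "p = (i, a - m)" then show "a = m + snd p \<and> b = 2*m + K (fst p) (snd p)" using i True by auto
    qed
  qed simp
  then show ?thesis using True i jj by auto
next
  case False
  show ?thesis
  proof (subst sum_none)
    fix p assume p: "p \<in> Sq"
    have "K (fst p) (snd p) \<in> {1..m}" using Krange[OF A_F] p by (cases p) auto
    then show "\<not> (a = m + snd p \<and> b = 2*m + K (fst p) (snd p))" using False p by (cases p) auto
  qed (use False in auto)
qed

lemma cellsum: assumes "a < b"
  shows "(\<Sum>p\<in>Sq. bd (cell m K (fst p) (snd p)) {a,b}) =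
    (if m < a \<and> a \<le> 2*m \<and> 2*m < b \<and> b \<le> 3*m then 1 else 0) - (if a \<in> {1..m} \<and> 2*m < b \<and> b \<le> 3*m then 1 else 0)
    + (if a \<in> {1..m} \<and> m < b \<and> b \<le> 2*m then (1::'a::field) else 0)"
proof -
  have "(\<Sum>p\<in>Sq. bd (cell m K (fst p) (snd p)) {a,b}) =
     (\<Sum>p\<in>Sq. (if a = m + snd p \<and> b = 2*m + K (fst p) (snd p) then (1::'a) else 0)
         - (if a = fst p \<and> b = 2*m + K (fst p) (snd p) then 1 else 0)
         + (if a = fst p \<and> b = m + snd p then 1 else 0))"
  proof (rule sum.cong)
    fix p assume p: "p \<in> Sq"
    obtain i j where ij: "p = (i, j)" "i \<in> {1..m}" "j \<in> {1..m}" using p by (cases p) auto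
    have k: "K i j \<in> {1..m}" using Krange[OF A_F ij(2,3)] .
    have o: "i < m + j" "m + j < 2*m + K i j" "i < 2*m + K i j" using ij k by auto
    show "bd (cell m K (fst p) (snd p)) {a,b} = (if a = m + snd p \<and> b = 2*m + K (fst p) (snd p) then (1::'a) else 0)
         - (if a = fst p \<and> b = 2*m + K (fst p) (snd p) then 1 else 0)
         + (if a = fst p \<and> b = m + snd p then 1 else 0)"
      unfolding ij(1) fst_conv snd_conv bd_cell[OF A_F ij(2,3)]
      using doubleton_ord[OF assms o(1)] doubleton_ord[OF assms o(2)] doubleton_ord[OF assms o(3)]
      by simp
  qed simp
  also have "\<dots> = (\<Sum>p\<in>Sq. (if a = m + snd p \<and> b = 2*m + K (fst p) (snd p) then (1::'a) else 0))
         - (\<Sum>p\<in>Sq. (if a = fst p \<and> b = 2*m + K (fst p) (snd p) then 1 else 0))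
         + (\<Sum>p\<in>Sq. (if a = fst p \<and> b = m + snd p then 1 else 0))"
    by (simp add: sum.distrib sum_subtractf)
  finally show ?thesis unfolding cnt12 cnt13 cnt23 .
qed

end


lemma final_alg:
  fixes l1 l2 l3 \<alpha> \<beta> \<gamma> :: "'a::field"
  assumes ab: "a < b" and s1: "l1 + l2 + l3 = 0" and s2: "\<alpha> + \<beta> + \<gamma> = 0"
  shows "oneform m l1 l2 l3 {a} * oneform m \<alpha> \<beta> \<gamma> {b} - oneform m l1 l2 l3 {b} * oneform m \<alpha> \<beta> \<gamma> {a} =
    (l1 * \<beta> - l2 * \<alpha>) * ((if m < a \<and> a \<le> 2*m \<and> 2*m < b \<and> b \<le> 3*m then 1 else 0) - (if a \<in> {1..m} \<and> 2*m < b \<and> b \<le> 3*m then 1 else 0)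
    + (if a \<in> {1..m} \<and> m < b \<and> b \<le> 2*m then 1 else 0))"
proof -
  have l3: "l3 = - l1 - l2" using s1 by (simp add: algebra_simps eq_neg_iff_add_eq_0)
  have g: "\<gamma> = - \<alpha> - \<beta>" using s2 by (simp add: algebra_simps eq_neg_iff_add_eq_0)
  consider (o) "a = 0 \<or> 3*m < a" | (b1) "1 \<le> a \<and> a \<le> m" | (b2) "m < a \<and> a \<le> 2*m" | (b3) "2*m < a \<and> a \<le> 3*m"
    by linarith
  then show ?thesis
  proof cases
    case o
    then show ?thesis unfolding oneform_sing using ab by (auto simp: l3 g)
  next
    case b1
    consider (c1) "b \<le> m" | (c2) "m < b \<and> b \<le> 2*m" | (c3) "2*m < b \<and> b \<le> 3*m" | (c4) "3*m < b" by linarith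
    then show ?thesis
      by cases (use b1 ab in \<open>auto simp: oneform_sing l3 g algebra_simps\<close>)
  next
    case b2
    consider (c2) "m < b \<and> b \<le> 2*m" | (c3) "2*m < b \<and> b \<le> 3*m" | (c4) "3*m < b" using ab b2 by linarith
    then show ?thesis
      by cases (use b2 ab in \<open>auto simp: oneform_sing l3 g algebra_simps\<close>)
  next
    case b3
    consider (c3) "2*m < b \<and> b \<le> 3*m" | (c4) "3*m < b" using ab b3 by linarith
    then show ?thesis
      by cases (use b3 ab in \<open>auto simp: oneform_sing l3 g algebra_simps\<close>)
  qed
qed

lemma wedge_deg0: assumes "hom p f" "y \<in> Edeg n 0" shows "wedge f y = escale (y {}) f"
proof (rule ext)
  fix U
  show "wedge f y U = escale (y {}) f U"
  proof (cases "finite U")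
    case True
    have "(\<Sum>S\<in>Pow U. ext_sign S (U - S) * f S * y (U - S)) = (\<Sum>S\<in>{U}. ext_sign S (U - S) * f S * y (U - S))"
    proof (rule sum.mono_neutral_right)
      show "\<forall>S\<in>Pow U - {U}. ext_sign S (U - S) * f S * y (U - S) = 0"
      proof
        fix S assume S: "S \<in> Pow U - {U}"
        have "y (U - S) = 0"
        proof (rule ccontr)
          assume "y (U - S) \<noteq> 0"
          then have "U - S \<subseteq> {1..n} \<and> card (U - S) = 0" using assms(2) unfolding Edeg_def by blast
          then have "U - S = {}" using finite_subset by fastforce
          then show False using S by auto
        qed
        then show "ext_sign S (U - S) * f S * y (U - S) = 0" by simp
      qed
    qed (use True in auto)
    then show ?thesis using True by (simp add: wedge_def mult.commute)
  next
    case False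
    then have "f U = 0" using assms(1) unfolding hom_def by blast
    then show ?thesis using False by (simp add: wedge_def)
  qed
qed

lemma dim_two:
  fixes p q :: "nat set \<Rightarrow> 'a::field"
  assumes "p \<noteq> q" "q \<noteq> 0" "p \<notin> range (\<lambda>k. escale k q)"
    "V \<subseteq> module.span escale {p,q}" "{p,q} \<subseteq> module.span escale V"
  shows "vector_space.dim escale V = 2"
proof -
  interpret vs: vector_space "escale :: 'a \<Rightarrow> (nat set \<Rightarrow> 'a) \<Rightarrow> _" by (rule vs_escale)
  have iq: "vs.independent {q}" using assms(2) by (simp add: vs.independent_insert)
  have "vs.independent {p,q}" using iq assms(1,3) by (simp add: vs.independent_insert vs.span_singleton)
  then have "vs.dim (vs.span {p,q}) = card {p,q}" by (rule vs.dim_span_eq_card_independent)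
  moreover have "vs.span V = vs.span {p,q}" using assms(4,5) vs.span_eq by blast
  ultimately show ?thesis using assms(1) by (metis vs.dim_span card_2_iff)
qed

lemma dim_one:
  fixes w :: "nat set \<Rightarrow> 'a::field"
  assumes "w \<noteq> 0"
  shows "vector_space.dim escale (range (\<lambda>k. escale k w)) = 1"
proof -
  interpret vs: vector_space "escale :: 'a \<Rightarrow> (nat set \<Rightarrow> 'a) \<Rightarrow> _" by (rule vs_escale)
  have iq: "vs.independent {w}" using assms by (simp add: vs.independent_insert)
  then have "vs.dim (vs.span {w}) = card {w}" by (rule vs.dim_span_eq_card_independent)
  then show ?thesis by (simp add: vs.span_singleton)
qed


context
  fixes m :: nat and K :: "nat \<Rightarrow> nat \<Rightarrow> nat" and Rs Cs Ss :: "nat set"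
  assumes m2: "m \<ge> 2" and lat: "latin_square m K" and sub: "subsquare m K Rs Cs Ss"
    and small: "card Rs < m"
  fixes l1 l2 l3 :: "'a::field"
  assumes sum0: "l1 + l2 + l3 = 0" and nzw: "oneform m l1 l2 l3 \<noteq> 0"
begin

lemmas A_H = m2 lat sub small
lemmas AL_H = m2 lat sub small sum0 nzw

lemma cell_fin: "finite (cell m K i j)" by (simp add: cell_def)

lemma wedge_V: assumes s: "\<alpha> + \<beta> + \<gamma> = (0::'a)"
  shows "wedge (oneform m l1 l2 l3) (oneform m \<alpha> \<beta> \<gamma>) =
    escale (l1 * \<beta> - l2 * \<alpha>) (\<Sum>p\<in>{1..m} \<times> {1..m}. bd (cell m K (fst p) (snd p)))"
proof (rule ext)
  fix U
  have hw: "hom 1 (oneform m l1 l2 l3)" and hm: "hom 1 (oneform m \<alpha> \<beta> \<gamma>)"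
    using Edeg_hom oneform_Edeg by blast+
  have hw2: "hom 2 (wedge (oneform m l1 l2 l3) (oneform m \<alpha> \<beta> \<gamma>))" using hom_wedge[OF hw hm] unfolding one_add_one .
  have R: "escale (l1 * \<beta> - l2 * \<alpha>) (\<Sum>p\<in>{1..m} \<times> {1..m}. bd (cell m K (fst p) (snd p))) U =
      (l1 * \<beta> - l2 * \<alpha>) * (\<Sum>p\<in>{1..m} \<times> {1..m}. bd (cell m K (fst p) (snd p)) U)"
    by (simp add: sum_fun_apply)
  show "wedge (oneform m l1 l2 l3) (oneform m \<alpha> \<beta> \<gamma>) U = escale (l1 * \<beta> - l2 * \<alpha>) (\<Sum>p\<in>{1..m} \<times> {1..m}. bd (cell m K (fst p) (snd p))) U"
  proof (cases "finite U \<and> card U = 2")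
    case False
    have "wedge (oneform m l1 l2 l3) (oneform m \<alpha> \<beta> \<gamma>) U = 0" using hw2 False unfolding hom_def by blast
    moreover have "(bd (cell m K (fst p) (snd p)) U :: 'a) = 0" if "p \<in> {1..m} \<times> {1..m}" for p
    proof -
      have "card (cell m K (fst p) (snd p)) = 3" using cell_card[OF A_H] that by auto
      moreover have "hom (card (cell m K (fst p) (snd p)) - 1) (bd (cell m K (fst p) (snd p)) :: nat set \<Rightarrow> 'a)"
        by (rule hom_bd[OF cell_fin])
      ultimately have "hom 2 (bd (cell m K (fst p) (snd p)) :: nat set \<Rightarrow> 'a)" by simp
      then show ?thesis using False unfolding hom_def by blast
    qed
    ultimately show ?thesis unfolding R by simp
  next
    case True
    then obtain a b where ab0: "U = {a,b}" "a \<noteq> b" using card_2_iff by metis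
    obtain a' b' where ab: "U = {a',b'}" "a' < b'"
    proof (cases "a < b")
      case True then show ?thesis using that ab0 by blast
    next
      case False then have "b < a" using ab0 by simp
      then show ?thesis using that ab0 by (metis insert_commute)
    qed
    show ?thesis unfolding R unfolding ab(1) wedge11[OF hw hm ab(2)] cellsum[OF A_H ab(2)]
      by (rule final_alg[OF ab(2) sum0 s])
  qed
qed

lemma V_sub_Z: assumes s: "\<alpha> + \<beta> + \<gamma> = (0::'a)"
  shows "wedge (oneform m l1 l2 l3) (oneform m \<alpha> \<beta> \<gamma>) \<in> os_ideal (3*m) (circuits {1..3*m} (ind m K (XJ m Rs Cs Ss)))"
proof -
  have mod: "module (escale :: 'a \<Rightarrow> _)" by (rule mod_escale)
  have "(bd (cell m K (fst p) (snd p)) :: nat set \<Rightarrow> 'a) \<in> os_ideal (3*m) (circuits {1..3*m} (ind m K (XJ m Rs Cs Ss)))"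
    if p: "p \<in> {1..m} \<times> {1..m}" for p
  proof -
    let ?C = "cell m K (fst p) (snd p)"
    have "fst p \<in> {1..m}" "snd p \<in> {1..m}" using p by auto
    then have "?C \<in> CK m K" unfolding CK_cell by blast
    then have C: "?C \<in> circuits {1..3*m} (ind m K (XJ m Rs Cs Ss))" using CK_circuits[OF A_H] by blast
    have h: "hom (card ?C - 1) (bd ?C :: nat set \<Rightarrow> 'a)" by (rule hom_bd[OF cell_fin])
    have e: "(bd ?C :: nat set \<Rightarrow> 'a) = wedge (wedge (ebas {}) (bd ?C)) (ebas {})"
      by (simp add: wedge_unit_left[OF h] wedge_unit_right[OF h])
    have "(wedge (wedge (ebas {}) (bd ?C)) (ebas {}) :: nat set \<Rightarrow> 'a) \<in> {wedge (wedge (ebas S) (bd C)) (ebas T) | S C T.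
       S \<subseteq> {1..3*m} \<and> T \<subseteq> {1..3*m} \<and> C \<in> circuits {1..3*m} (ind m K (XJ m Rs Cs Ss))}"
      using C by blast
    then have "(wedge (wedge (ebas {}) (bd ?C)) (ebas {}) :: nat set \<Rightarrow> 'a) \<in> module.span escale {wedge (wedge (ebas S) (bd C)) (ebas T) | S C T.
       S \<subseteq> {1..3*m} \<and> T \<subseteq> {1..3*m} \<and> C \<in> circuits {1..3*m} (ind m K (XJ m Rs Cs Ss))}"
      by (rule module.span_base[OF mod])
    then have "(wedge (wedge (ebas {}) (bd ?C)) (ebas {}) :: nat set \<Rightarrow> 'a) \<in> os_ideal (3*m) (circuits {1..3*m} (ind m K (XJ m Rs Cs Ss)))"
      unfolding os_ideal_def .
    then show ?thesis by (simp only: e[symmetric])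
  qed
  then have "(\<Sum>p\<in>{1..m} \<times> {1..m}. bd (cell m K (fst p) (snd p)) :: nat set \<Rightarrow> 'a) \<in> os_ideal (3*m) (circuits {1..3*m} (ind m K (XJ m Rs Cs Ss)))"
    unfolding os_ideal_def by (intro module.span_sum[OF mod]) auto
  then show ?thesis unfolding wedge_V[OF s] os_ideal_def by (rule module.span_scale[OF mod])
qed

lemma Z_eq: "{x \<in> Edeg (3*m) 1. wedge (oneform m l1 l2 l3) x \<in> os_ideal (3*m) (circuits {1..3*m} (ind m K (XJ m Rs Cs Ss)))}
   = {oneform m a b c | a b c. a + b + c = (0::'a)}"
proof
  show "{x \<in> Edeg (3*m) 1. wedge (oneform m l1 l2 l3) x \<in> os_ideal (3*m) (circuits {1..3*m} (ind m K (XJ m Rs Cs Ss)))}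
   \<subseteq> {oneform m a b c | a b c. a + b + c = (0::'a)}"
    using Z_sub_V[OF AL_H] by blast
  show "{oneform m a b c | a b c. a + b + c = (0::'a)} \<subseteq>
     {x \<in> Edeg (3*m) 1. wedge (oneform m l1 l2 l3) x \<in> os_ideal (3*m) (circuits {1..3*m} (ind m K (XJ m Rs Cs Ss)))}"
    using V_sub_Z oneform_Edeg by blast
qed

lemma dimZ: "vector_space.dim escale {oneform m a b c | a b c. a + b + c = (0::'a)} = 2"
proof -
  have mod: "module (escale :: 'a \<Rightarrow> _)" by (rule mod_escale)
  let ?p = "oneform m (1::'a) (-1) 0" and ?q = "oneform m (0::'a) 1 (-1)"
  have m1: "1 \<le> m" "m + 1 \<le> 2*m" "m < m + 1" using m2 by auto
  have p1: "?p {1} = 1" "?q {1} = 0" "?q {m+1} = 1" using m1 by (auto simp: oneform_sing)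
  show ?thesis
  proof (rule dim_two)
    show "?p \<noteq> ?q" using p1 by (metis zero_neq_one)
    show "?q \<noteq> 0" using p1 by (metis zero_fun_apply zero_neq_one)
    show "?p \<notin> range (\<lambda>k. escale k ?q)" using p1 by (auto simp: fun_eq_iff)
    show "{oneform m a b c | a b c. a + b + c = (0::'a)} \<subseteq> module.span escale {?p, ?q}"
    proof
      fix x assume "x \<in> {oneform m a b c | a b c. a + b + c = (0::'a)}"
      then obtain a b c where x: "x = oneform m a b c" "a + b + c = (0::'a)" by blast
      have "c = - a - b" using x(2) by (simp add: algebra_simps eq_neg_iff_add_eq_0)
      then have "x = escale a ?p + escale (a + b) ?q" unfolding x(1)
        by (auto simp: fun_eq_iff oneform_def algebra_simps)
      then show "x \<in> module.span escale {?p, ?q}"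
        by (metis module.span_add[OF mod] module.span_scale[OF mod] module.span_base[OF mod] insertI1 insertI2 singletonI)
    qed
    show "{?p, ?q} \<subseteq> module.span escale {oneform m a b c | a b c. a + b + c = (0::'a)}"
    proof -
      let ?V = "{oneform m a b c | a b c. a + b + c = (0::'a)}"
      have "?p \<in> ?V" unfolding mem_Collect_eq
        by (intro exI[of _ "1::'a"] exI[of _ "-1::'a"] exI[of _ "0::'a"]) simp
      then have 1: "?p \<in> module.span escale ?V" by (rule module.span_base[OF mod])
      have "?q \<in> ?V" unfolding mem_Collect_eq
        by (intro exI[of _ "0::'a"] exI[of _ "1::'a"] exI[of _ "-1::'a"]) simp
      then have 2: "?q \<in> module.span escale ?V" by (rule module.span_base[OF mod])
      show ?thesis using 1 2 by simp
    qed
  qed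
qed

lemma B_eq: "{wedge (oneform m l1 l2 l3) y + z | y z. y \<in> Edeg (3*m) 0 \<and>
     z \<in> os_ideal (3*m) (circuits {1..3*m} (ind m K (XJ m Rs Cs Ss))) \<inter> Edeg (3*m) 1}
   = range (\<lambda>k. escale k (oneform m l1 l2 l3))"
proof -
  have hw: "hom 1 (oneform m l1 l2 l3)" using Edeg_hom oneform_Edeg by blast
  have mod: "module (escale :: 'a \<Rightarrow> _)" by (rule mod_escale)
  show ?thesis
  proof
    show "{wedge (oneform m l1 l2 l3) y + z | y z. y \<in> Edeg (3*m) 0 \<and>
      z \<in> os_ideal (3*m) (circuits {1..3*m} (ind m K (XJ m Rs Cs Ss))) \<inter> Edeg (3*m) 1}
      \<subseteq> range (\<lambda>k. escale k (oneform m l1 l2 l3))"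
    proof
      fix v assume "v \<in> {wedge (oneform m l1 l2 l3) y + z | y z. y \<in> Edeg (3*m) 0 \<and>
        z \<in> os_ideal (3*m) (circuits {1..3*m} (ind m K (XJ m Rs Cs Ss))) \<inter> Edeg (3*m) 1}"
      then obtain y z where v: "v = wedge (oneform m l1 l2 l3) y + z" "y \<in> Edeg (3*m) 0"
        "z \<in> os_ideal (3*m) (circuits {1..3*m} (ind m K (XJ m Rs Cs Ss)))" "z \<in> Edeg (3*m) 1" by blast
      have "z = 0"
      proof (rule ext)
        fix U show "z U = 0 U"
        proof (rule ccontr)
          assume "z U \<noteq> 0 U"
          then have "card U = 1" using v(4) unfolding Edeg_def by auto
          then have "z U = 0" using ideal_low[OF A_H v(3)] by simp
          then show False using \<open>z U \<noteq> 0 U\<close> by simp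
        qed
      qed
      then have "v = escale (y {}) (oneform m l1 l2 l3)" using v(1) wedge_deg0[OF hw v(2)] by simp
      then show "v \<in> range (\<lambda>k. escale k (oneform m l1 l2 l3))" by blast
    qed
  next
    show "range (\<lambda>k. escale k (oneform m l1 l2 l3)) \<subseteq> {wedge (oneform m l1 l2 l3) y + z | y z. y \<in> Edeg (3*m) 0 \<and>
      z \<in> os_ideal (3*m) (circuits {1..3*m} (ind m K (XJ m Rs Cs Ss))) \<inter> Edeg (3*m) 1}"
    proof
      fix v assume "v \<in> range (\<lambda>k. escale k (oneform m l1 l2 l3))"
      then obtain k where k: "v = escale k (oneform m l1 l2 l3)" by blast
      define y :: "nat set \<Rightarrow> 'a" where "y = (\<lambda>S. if S = {} then k else 0)"
      have y: "y \<in> Edeg (3*m) 0" unfolding Edeg_def y_def by auto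
      have z: "(0 :: nat set \<Rightarrow> 'a) \<in> os_ideal (3*m) (circuits {1..3*m} (ind m K (XJ m Rs Cs Ss))) \<inter> Edeg (3*m) 1"
        unfolding os_ideal_def Edeg_def using module.span_zero[OF mod] by auto
      have "v = wedge (oneform m l1 l2 l3) y + 0" using wedge_deg0[OF hw y] k by (simp add: y_def)
      then show "v \<in> {wedge (oneform m l1 l2 l3) y + z | y z. y \<in> Edeg (3*m) 0 \<and>
        z \<in> os_ideal (3*m) (circuits {1..3*m} (ind m K (XJ m Rs Cs Ss))) \<inter> Edeg (3*m) 1}"
        using y z by blast
    qed
  qed
qed

lemma cohom: "os_cohom_dim (3*m) (circuits {1..3*m} (ind m K (XJ m Rs Cs Ss))) (oneform m l1 l2 l3) 1 = 1"
proof -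
  have "os_cohom_dim (3*m) (circuits {1..3*m} (ind m K (XJ m Rs Cs Ss))) (oneform m l1 l2 l3) 1 =
     vector_space.dim escale {x \<in> Edeg (3*m) 1. wedge (oneform m l1 l2 l3) x \<in> os_ideal (3*m) (circuits {1..3*m} (ind m K (XJ m Rs Cs Ss)))}
     - vector_space.dim escale {wedge (oneform m l1 l2 l3) y + z | y z. y \<in> Edeg (3*m) 0 \<and>
     z \<in> os_ideal (3*m) (circuits {1..3*m} (ind m K (XJ m Rs Cs Ss))) \<inter> Edeg (3*m) 1}"
    unfolding os_cohom_dim_def Let_def by simp
  also have "\<dots> = 2 - 1" unfolding Z_eq B_eq dimZ dim_one[OF nzw] ..
  finally show ?thesis by simp
qed

end

theorem proposition3p3:
  fixes m :: nat and K :: "nat \<Rightarrow> nat \<Rightarrow> nat" and Rs Cs Ss :: "nat set"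
  assumes "m \<ge> 2"
    and "latin_square m K"
    and "subsquare m K Rs Cs Ss"
    and "card Rs < m"
  shows "\<exists>indep. degeneration_of_MK m K indep \<and> simple_matroid {1..3*m} indep \<and>
           restriction_uniform2 indep (XJ m Rs Cs Ss) \<and>
           (\<forall>l1 l2 l3 :: 'a::field. l1 + l2 + l3 = 0 \<and> oneform m l1 l2 l3 \<noteq> 0 \<longrightarrow>
              os_cohom_dim (3*m) (circuits {1..3*m} indep) (oneform m l1 l2 l3) 1 = 1)"
proof (intro exI conjI allI impI)
  show "degeneration_of_MK m K (ind m K (XJ m Rs Cs Ss))" by (rule degen[OF assms])
  show "simple_matroid {1..3*m} (ind m K (XJ m Rs Cs Ss))" by (rule simple[OF assms])
  show "restriction_uniform2 (ind m K (XJ m Rs Cs Ss)) (XJ m Rs Cs Ss)" by (rule unif[OF assms])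
  fix l1 l2 l3 :: 'a assume "l1 + l2 + l3 = 0 \<and> oneform m l1 l2 l3 \<noteq> 0"
  then show "os_cohom_dim (3*m) (circuits {1..3*m} (ind m K (XJ m Rs Cs Ss))) (oneform m l1 l2 l3) 1 = 1"
    using cohom[OF assms] by blast
qed


end
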